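(* For all positive integers $m,n$, the diameter of the cyclic simplicial rook graph satisfies $\operatorname{diam}(\mathcal{CSR}(m,n))=m-\left\lfloor \frac{m-1}{n}\right\rfloor-1$.
   Context: For positive integers $m,n$, the cyclic simplicial rook graph $\mathcal{CSR}(m,n)$ is the graph whose vertices are the vectors $(a_1,\dots,a_m)\in\mathbb{Z}_n^m$ with $a_1+\cdots+a_m\equiv 0 \pmod n$, two vertices being adjacent if and only if their vectors differ in exactly two coordinates. *)

theory Defs
  imports Main "HOL-Library.Extended_Nat"
begin

text \<open>Vertices of CSR(m,n): vectors (a_1,...,a_m) in Z_n^m (entries represented by
  residues 0..n-1, as lists of length m) whose coordinate sum is 0 mod n.\<close>
definition csr_vertices :: "nat \<Rightarrow> nat \<Rightarrow> nat list set" where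
  "csr_vertices m n = {xs. length xs = m \<and> (\<forall>x\<in>set xs. x < n) \<and> sum_list xs mod n = 0}"

definition csr_adj :: "nat \<Rightarrow> nat \<Rightarrow> nat list \<Rightarrow> nat list \<Rightarrow> bool" where
  "csr_adj m n xs ys \<longleftrightarrow> xs \<in> csr_vertices m n \<and> ys \<in> csr_vertices m n \<and>
     card {i. i < m \<and> xs ! i \<noteq> ys ! i} = 2"

definition graph_dist :: "('a \<Rightarrow> 'a \<Rightarrow> bool) \<Rightarrow> 'a \<Rightarrow> 'a \<Rightarrow> enat" where
  "graph_dist E u v = (INF k \<in> {k. (E ^^ k) u v}. enat k)"

definition graph_diam :: "'a set \<Rightarrow> ('a \<Rightarrow> 'a \<Rightarrow> bool) \<Rightarrow> enat" where
  "graph_diam V E = (SUP u \<in> V. SUP v \<in> V. graph_dist E u v)"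

end

theory Submission
  imports Defs
begin

lemma l1: "((a::nat) + R) mod n = (b + R) mod n \<Longrightarrow> a mod n = b mod n"
  by (simp add: nat_mod_eq_iff)
lemma l2: "((a::nat) + d) mod n = a mod n \<Longrightarrow> d mod n = 0"
  using l1[of d a n 0] by (simp add: add.commute)

lemma vert_iff:
  "xs \<in> csr_vertices m n \<longleftrightarrow> length xs = m \<and> (\<forall>i<m. xs!i < n) \<and> n dvd (\<Sum>i<m. xs!i)"
  unfolding csr_vertices_def
  by (auto simp: sum_list_sum_nth atLeast0LessThan in_set_conv_nth mod_eq_0_iff_dvd)
     (metis nth_mem)

lemma vert_change:
  assumes u: "u \<in> csr_vertices m n" and lw: "length w = m" and wn: "\<forall>t<m. w!t < n"
    and S: "S \<subseteq> {..<m}" and eq: "\<forall>t<m. t \<notin> S \<longrightarrow> w!t = u!t"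
    and md: "(\<Sum>t\<in>S. w!t) mod n = (\<Sum>t\<in>S. u!t) mod n"
  shows "w \<in> csr_vertices m n"
proof -
  have fin: "finite S" using S finite_subset by blast
  have "(\<Sum>t<m. w!t) = (\<Sum>t\<in>S. w!t) + (\<Sum>t\<in>{..<m}-S. w!t)"
    using S fin by (metis add.commute finite_lessThan sum.subset_diff)
  moreover have "(\<Sum>t<m. u!t) = (\<Sum>t\<in>S. u!t) + (\<Sum>t\<in>{..<m}-S. u!t)"
    using S fin by (metis add.commute finite_lessThan sum.subset_diff)
  moreover have "(\<Sum>t\<in>{..<m}-S. w!t) = (\<Sum>t\<in>{..<m}-S. u!t)"
    using eq by (intro sum.cong) auto
  ultimately have "(\<Sum>t<m. w!t) mod n = (\<Sum>t<m. u!t) mod n"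
    using md by (metis mod_add_left_eq)
  then show ?thesis using u lw wn unfolding vert_iff by (simp add: mod_eq_0_iff_dvd[symmetric])
qed

lemma one_diff:
  assumes u: "u \<in> csr_vertices m n" and v: "v \<in> csr_vertices m n"
    and D: "{t. t<m \<and> u!t \<noteq> v!t} \<subseteq> {i}"
  shows "u = v"
proof (rule ccontr)
  assume ne: "u \<noteq> v"
  have lu: "length u = m" "length v = m" using u v by (auto simp: vert_iff)
  then obtain t where t: "t < m" "u!t \<noteq> v!t" using ne nth_equalityI by metis
  then have ti: "t = i" using D by auto
  have "(\<Sum>s<m. u!s) = u!i + (\<Sum>s\<in>{..<m}-{i}. u!s)"
    using t ti by (metis finite_lessThan lessThan_iff sum.remove)
  moreover have "(\<Sum>s<m. v!s) = v!i + (\<Sum>s\<in>{..<m}-{i}. v!s)"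
    using t ti by (metis finite_lessThan lessThan_iff sum.remove)
  moreover have "(\<Sum>s\<in>{..<m}-{i}. u!s) = (\<Sum>s\<in>{..<m}-{i}. v!s)"
    using D by (intro sum.cong) auto
  ultimately have "u!i mod n = v!i mod n" using u v unfolding vert_iff
    by (metis l1 dvd_imp_mod_0)
  moreover have "u!i < n" "v!i < n" using u v t ti by (auto simp: vert_iff)
  ultimately show False using t ti by simp
qed


lemma move_exists:
  assumes n: "0 < n" and u: "u \<in> csr_vertices m n" and v: "v \<in> csr_vertices m n"
    and i: "i < m" "u!i \<noteq> v!i" and j: "j < m" "u!j \<noteq> v!j" and ij: "i \<noteq> j"
  shows "\<exists>w. csr_adj m n u w \<and> w \<in> csr_vertices m n \<and>
     {t. t<m \<and> w!t \<noteq> v!t} \<subseteq> {t. t<m \<and> u!t \<noteq> v!t} - {i}"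
proof -
  have lu: "length u = m" "length v = m" using u v by (auto simp: vert_iff)
  have un: "\<And>t. t<m \<Longrightarrow> u!t < n" "\<And>t. t<m \<Longrightarrow> v!t < n" using u v by (auto simp: vert_iff)
  define w where "w = u[i := v!i, j := (u!j + u!i + (n - v!i)) mod n]"
  have lw: "length w = m" using lu by (simp add: w_def)
  have wi: "w!i = v!i" using ij i lu by (simp add: w_def)
  have wj: "w!j = (u!j + u!i + (n - v!i)) mod n" using j lu by (simp add: w_def)
  have wo: "\<And>t. t \<noteq> i \<Longrightarrow> t \<noteq> j \<Longrightarrow> w!t = u!t" by (simp add: w_def)
  have wn: "\<forall>t<m. w!t < n"
    using wi wj wo un i n by (metis mod_less_divisor)
  have sS: "(\<Sum>t\<in>{i,j}. w!t) mod n = (\<Sum>t\<in>{i,j}. u!t) mod n"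
  proof -
    have "(\<Sum>t\<in>{i,j}. w!t) = v!i + (u!j + u!i + (n - v!i)) mod n" using ij wi wj by simp
    also have "\<dots> mod n = (v!i + (u!j + u!i + (n - v!i))) mod n" by (simp add: mod_add_right_eq)
    also have "v!i + (u!j + u!i + (n - v!i)) = (u!i + u!j) + n" using un(2)[OF i(1)] by simp
    also have "((u!i + u!j) + n) mod n = (\<Sum>t\<in>{i,j}. u!t) mod n" using ij by simp
    finally show ?thesis .
  qed
  have wV: "w \<in> csr_vertices m n"
    by (rule vert_change[OF u lw wn, of "{i,j}"]) (use i j wo sS in auto)
  have wju: "w!j \<noteq> u!j"
  proof
    assume "w!j = u!j"
    then have "(u!j + (u!i + (n - v!i))) mod n = u!j mod n" using wj un(1)[OF j(1)] by (simp add: add.assoc)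
    then have "(u!i + (n - v!i)) mod n = 0" by (rule l2)
    moreover have "u!i + (n - v!i) > 0" "u!i + (n - v!i) < 2*n"
      using un(1)[OF i(1)] un(2)[OF i(1)] i(2) by linarith+
    ultimately have "u!i + (n - v!i) = n"
    proof -
      assume a: "(u!i + (n - v!i)) mod n = 0" "u!i + (n - v!i) > 0" "u!i + (n - v!i) < 2*n"
      obtain q where q: "u!i + (n - v!i) = n * q" using a(1) by blast
      have "q \<noteq> 0" using q a(2) by auto
      moreover have "q < 2" using q a(3) by (metis mult.commute mult_less_cancel2)
      ultimately have "q = 1" by linarith
      then show ?thesis using q by simp
    qed
    then show False using i un[OF i(1)] by simp
  qed
  have D: "{t. t<m \<and> u!t \<noteq> w!t} = {i,j}"
    using wi wju i j by (auto; metis wo)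
  have adj: "csr_adj m n u w"
    unfolding csr_adj_def using u wV D ij by simp
  have "{t. t<m \<and> w!t \<noteq> v!t} \<subseteq> {t. t<m \<and> u!t \<noteq> v!t} - {i}"
    using wi j by (auto; metis wo)
  then show ?thesis using adj wV by blast
qed

lemma greedy:
  assumes n: "0 < n" and u: "u \<in> csr_vertices m n" and v: "v \<in> csr_vertices m n"
    and s: "card {t. t<m \<and> u!t \<noteq> v!t} = s"
  shows "\<exists>k \<le> s - 1. (csr_adj m n ^^ k) u v"
  using u s
proof (induction s arbitrary: u rule: less_induct)
  case (less s u)
  show ?case
  proof (cases "u = v")
    case True then show ?thesis by (intro exI[of _ 0]) simp
  next
    case False
    define D where "D = {t. t<m \<and> u!t \<noteq> v!t}"
    have finD: "finite D" unfolding D_def by simp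
    obtain i where i: "i \<in> D" using False one_diff[OF less.prems(1) v] unfolding D_def by blast
    obtain j where j: "j \<in> D" "j \<noteq> i" using False one_diff[OF less.prems(1) v, of i] unfolding D_def by blast
    obtain w where w: "csr_adj m n u w" "w \<in> csr_vertices m n"
        "{t. t<m \<and> w!t \<noteq> v!t} \<subseteq> D - {i}"
      using move_exists[OF n less.prems(1) v, of i j] i j unfolding D_def by auto
    define s' where "s' = card {t. t<m \<and> w!t \<noteq> v!t}"
    have "s' \<le> card (D - {i})" unfolding s'_def using w(3) finD by (intro card_mono) auto
    also have "\<dots> = s - 1" using i finD less.prems(2) D_def by simp
    finally have s's: "s' \<le> s - 1" .
    have s2: "s \<ge> 2"
    proof -
      have "{i,j} \<subseteq> D" using i j by auto
      then have "card {i,j} \<le> card D" using finD card_mono by blast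
      then show ?thesis using j less.prems(2) D_def by simp
    qed
    show ?thesis
    proof (cases "w = v")
      case True
      then show ?thesis using w(1) s2 by (intro exI[of _ 1]) auto
    next
      case False
      have "s' \<noteq> 0"
      proof
        assume "s' = 0"
        then have "{t. t<m \<and> w!t \<noteq> v!t} = {}" unfolding s'_def by simp
        then show False using one_diff[OF w(2) v] False by blast
      qed
      have "s' < s" using s's s2 by linarith
      then obtain k where k: "k \<le> s' - 1" "(csr_adj m n ^^ k) w v"
        using less.IH[OF _ w(2) s'_def[symmetric]] by blast
      have "(csr_adj m n ^^ Suc k) u v" using relpowp_Suc_I2[OF w(1) k(2)] .
      moreover have "Suc k \<le> s - 1" using k s's \<open>s' \<noteq> 0\<close> by linarith
      ultimately show ?thesis by blast
    qed
  qed
qed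


lemma zs_subset:
  assumes n: "0 < n" and fin: "finite D" and c: "n \<le> card D"
  shows "\<exists>B \<subseteq> D. B \<noteq> {} \<and> card B \<le> n \<and> (\<Sum>t\<in>B. a t) mod n = (\<Sum>t\<in>B. b t) mod n"
proof -
  obtain D0 where D0: "D0 \<subseteq> D" "card D0 = n" "finite D0" using obtain_subset_with_card_n[OF c] by blast
  obtain h where h: "bij_betw h {0..<n} D0" using ex_bij_betw_nat_finite[OF D0(3)] D0(2) by auto
  define g where "g l = int (a (h l)) - int (b (h l))" for l
  define P where "P t = (\<Sum>l<t. g l) mod int n" for t
  have "P ` {..n} \<subseteq> {0..<int n}" using n unfolding P_def by auto
  then have "card (P ` {..n}) \<le> card {0..<int n}" by (intro card_mono) auto
  then have "card (P ` {..n}) \<le> n" by simp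
  then have "\<not> inj_on P {..n}" using card_image[of P "{..n}"] by auto
  then obtain t1 t2 where t: "t1 \<le> n" "t2 \<le> n" "t1 \<noteq> t2" "P t1 = P t2"
  proof -
    obtain x y where "x \<in> {..n}" "y \<in> {..n}" "P x = P y" "x \<noteq> y"
      using \<open>\<not> inj_on P {..n}\<close> unfolding inj_on_def by blast
    then show ?thesis using that by simp
  qed
  then obtain t1 t2 where t: "t1 < t2" "t2 \<le> n" "P t1 = P t2"
    by (metis linorder_neqE_nat order_le_less_trans order_less_imp_le)
  have split: "(\<Sum>l<t2. g l) = (\<Sum>l<t1. g l) + (\<Sum>l\<in>{t1..<t2}. g l)"
    using t(1) by (metis lessThan_atLeast0 sum.atLeastLessThan_concat less_imp_le zero_le)
  have dv: "int n dvd (\<Sum>l\<in>{t1..<t2}. g l)"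
    using t(3) unfolding P_def split by (simp add: mod_eq_dvd_iff)
  define B where "B = h ` {t1..<t2}"
  have sub: "{t1..<t2} \<subseteq> {0..<n}" using t by auto
  have inj: "inj_on h {t1..<t2}" using h sub unfolding bij_betw_def by (blast intro: inj_on_subset)
  have BD0: "B \<subseteq> D0" using h sub unfolding B_def bij_betw_def by auto
  have cB: "card B = t2 - t1" unfolding B_def using card_image[OF inj] by simp
  have "(\<Sum>l\<in>{t1..<t2}. g l) = int (\<Sum>t\<in>B. a t) - int (\<Sum>t\<in>B. b t)"
    unfolding B_def g_def by (simp add: sum.reindex[OF inj] sum_subtractf)
  then have "(\<Sum>t\<in>B. a t) mod n = (\<Sum>t\<in>B. b t) mod n" using dv
    by (metis mod_eq_dvd_iff of_nat_eq_iff zmod_int)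
  moreover have "B \<noteq> {}" using cB t by auto
  moreover have "card B \<le> n" using cB t by simp
  ultimately show ?thesis using BD0 D0 by blast
qed


lemma h_ar: "(q1::nat) \<le> s-b-1 \<Longrightarrow> q2 \<le> q1+1 \<Longrightarrow> q2 \<le> s-1 \<Longrightarrow> 1\<le>b \<Longrightarrow> b<s \<Longrightarrow> (b-1) + ((s-b) - q1 - 1) \<le> s - q2 - 1"
  by linarith

lemma h_ar2: "(a::nat) \<le> c + 1 \<Longrightarrow> c \<le> s - 1 \<Longrightarrow> a \<le> s \<Longrightarrow> s - c - 1 \<le> s - a"
  by linarith

lemma arith1:
  assumes "0 < (n::nat)" "1 \<le> b" "b \<le> n" "b < s"
  shows "(b - 1) + ((s-b) - (s-b-1) div n - 1) \<le> s - (s-1) div n - 1"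
proof -
  have q1: "(s-b-1) div n \<le> s-b-1" by (rule div_le_dividend)
  have "(s-1) div n \<le> ((s-b-1) + n) div n" using assms by (intro div_le_mono) linarith
  also have "\<dots> = (s-b-1) div n + 1" by (rule div_add_self2) (use assms in auto)
  finally have q2: "(s-1) div n \<le> (s-b-1) div n + 1" .
  have q3: "(s-1) div n \<le> s-1" by (rule div_le_dividend)
  show ?thesis using h_ar[OF q1 q2 q3] assms(2,4) by blast
qed

lemma fmono:
  assumes "0 < (n::nat)" "s \<le> m"
  shows "s - (s-1) div n - 1 \<le> m - (m-1) div n - 1"
proof -
  have "\<And>s. s - (s-1) div n - 1 \<le> Suc s - (Suc s - 1) div n - 1"
  proof -
    fix s :: nat
    have "s div n \<le> ((s-1) + n) div n" using assms by (intro div_le_mono) linarith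
    also have "\<dots> = (s-1) div n + 1" using assms by simp
    finally have "s div n \<le> (s-1) div n + 1" .
    moreover have "(s-1) div n \<le> s - 1" by (rule div_le_dividend)
    moreover have "s div n \<le> s" by (rule div_le_dividend)
    ultimately have "s - (s-1) div n - 1 \<le> s - s div n" by (rule h_ar2)
    then show "s - (s-1) div n - 1 \<le> Suc s - (Suc s - 1) div n - 1" by (simp only: diff_Suc_1)
  qed
  then show ?thesis using lift_Suc_mono_le[of "\<lambda>s. s - (s-1) div n - 1"] assms(2) by blast
qed

lemma upper:
  assumes n: "0 < n" and u: "u \<in> csr_vertices m n" and v: "v \<in> csr_vertices m n"
    and s: "card {t. t<m \<and> u!t \<noteq> v!t} = s"
  shows "\<exists>k \<le> s - (s-1) div n - 1. (csr_adj m n ^^ k) u v"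
  using u s
proof (induction s arbitrary: u rule: less_induct)
  case (less s u)
  show ?case
  proof (cases "s \<le> n")
    case True
    then have "(s-1) div n = 0" using n by simp
    then show ?thesis using greedy[OF n less.prems(1) v less.prems(2)] by simp
  next
    case False
    define D where "D = {t. t<m \<and> u!t \<noteq> v!t}"
    have finD: "finite D" unfolding D_def by simp
    obtain B where B: "B \<subseteq> D" "B \<noteq> {}" "card B \<le> n" "(\<Sum>t\<in>B. v!t) mod n = (\<Sum>t\<in>B. u!t) mod n"
      using zs_subset[OF n finD, of "\<lambda>t. v!t" "\<lambda>t. u!t"] False less.prems(2) D_def by auto
    have finB: "finite B" using B(1) finD finite_subset by blast
    have lu: "length u = m" "length v = m" using less.prems(1) v by (auto simp: vert_iff)
    have un: "\<And>t. t<m \<Longrightarrow> u!t < n" "\<And>t. t<m \<Longrightarrow> v!t < n" using less.prems(1) v by (auto simp: vert_iff)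
    define w where "w = map (\<lambda>t. if t \<in> B then v!t else u!t) [0..<m]"
    have lw: "length w = m" unfolding w_def by simp
    have wt: "\<And>t. t < m \<Longrightarrow> w!t = (if t \<in> B then v!t else u!t)" unfolding w_def by simp
    have Bm: "B \<subseteq> {..<m}" using B(1) D_def by auto
    have wV: "w \<in> csr_vertices m n"
    proof (rule vert_change[OF less.prems(1) lw, of B])
      show "\<forall>t<m. w!t < n" using wt un by simp
      show "B \<subseteq> {..<m}" by fact
      show "\<forall>t<m. t \<notin> B \<longrightarrow> w ! t = u ! t" using wt by simp
      have "(\<Sum>t\<in>B. w!t) = (\<Sum>t\<in>B. v!t)" using wt Bm by (intro sum.cong) auto
      then show "(\<Sum>t\<in>B. w!t) mod n = (\<Sum>t\<in>B. u!t) mod n" using B(4) by simp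
    qed
    have D1: "{t. t<m \<and> u!t \<noteq> w!t} = B" using wt B(1) D_def by auto
    have D2: "{t. t<m \<and> w!t \<noteq> v!t} = D - B" using wt B(1) D_def by (auto split: if_splits)
    obtain k1 where k1: "k1 \<le> card B - 1" "(csr_adj m n ^^ k1) u w"
      using greedy[OF n less.prems(1) wV, of "card B"] D1 by auto
    have cB: "1 \<le> card B" using B(2) finB by (simp add: Suc_le_eq card_gt_0_iff)
    have cD2: "card (D - B) = s - card B" using finB B(1) less.prems(2) D_def by (simp add: card_Diff_subset)
    have lt: "s - card B < s" using cB False by linarith
    obtain k2 where k2: "k2 \<le> (s - card B) - (s - card B - 1) div n - 1" "(csr_adj m n ^^ k2) w v"
      using less.IH[OF lt wV] D2 cD2 by auto
    have "(csr_adj m n ^^ (k1 + k2)) u v" using relpowp_trans[OF k1(2) k2(2)] .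
    moreover have "k1 + k2 \<le> s - (s-1) div n - 1"
    proof -
      have "card B < s" using B(3) False by linarith
      from arith1[OF n cB B(3) this] show ?thesis using k1(1) k2(1) by linarith
    qed
    ultimately show ?thesis by blast
  qed
qed


definition zsc :: "nat \<Rightarrow> nat \<Rightarrow> nat list \<Rightarrow> nat \<Rightarrow> bool" where
  "zsc m n x k \<longleftrightarrow> (\<exists>T (c::nat\<Rightarrow>nat). T \<subseteq> {..<m} \<and> {t. t<m \<and> x!t \<noteq> 0} \<subseteq> T \<and>
     (\<forall>col. n dvd (\<Sum>t\<in>{t\<in>T. c t = col}. x!t)) \<and> card T \<le> k + card (c ` T))"

lemma step_card:
  assumes "card T \<le> k + C" "a' \<le> a" "a' \<le> C" "a \<le> 2" "cT' = card T + 2 - a" "cC' = Suc (C - a')"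
  shows "cT' \<le> Suc k + cC'"
  using assms by linarith

lemma zsc_step:
  assumes zy: "zsc m n y k" and adj: "csr_adj m n y x"
  shows "zsc m n x (Suc k)"
proof -
  obtain T and c :: "nat \<Rightarrow> nat" where T: "T \<subseteq> {..<m}" "{t. t<m \<and> y!t \<noteq> 0} \<subseteq> T"
     "\<forall>col. n dvd (\<Sum>t\<in>{t\<in>T. c t = col}. y!t)" "card T \<le> k + card (c ` T)"
    using zy unfolding zsc_def by blast
  have finT: "finite T" using T(1) finite_subset by blast
  have xV: "x \<in> csr_vertices m n" using adj unfolding csr_adj_def by blast
  obtain i j where ij: "{t. t<m \<and> y!t \<noteq> x!t} = {i,j}" "i \<noteq> j"
    using adj unfolding csr_adj_def card_2_iff by blast
  have "i \<in> {t. t<m \<and> y!t \<noteq> x!t}" "j \<in> {t. t<m \<and> y!t \<noteq> x!t}" unfolding ij(1) by simp_all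
  then have ijm: "i < m" "j < m" by simp_all
  have oth: "x!t = y!t" if "t \<noteq> i" "t \<noteq> j" "t < m" for t
  proof -
    have "t \<notin> {t. t<m \<and> y!t \<noteq> x!t}" unfolding ij(1) using that by simp
    then show ?thesis using that by simp
  qed
  obtain col0 where col0: "col0 \<notin> c ` T" using ex_new_if_finite[OF infinite_UNIV_nat] finT by blast
  define I where "I = {i,j} \<inter> T"
  define T' where "T' = T \<union> {i,j}"
  define c' where "c' t = (if t \<in> {i,j} \<or> c t \<in> c ` I then col0 else c t)" for t
  have finT': "finite T'" unfolding T'_def using finT by simp
  have T'm: "T' \<subseteq> {..<m}" unfolding T'_def using T(1) ijm by auto
  have supp: "{t. t<m \<and> x!t \<noteq> 0} \<subseteq> T'"
  proof
    fix t assume t: "t \<in> {t. t<m \<and> x!t \<noteq> 0}"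
    show "t \<in> T'"
    proof (cases "t \<in> {i,j}")
      case True then show ?thesis unfolding T'_def by blast
    next
      case False then have "y!t \<noteq> 0" using oth t by auto
      then show ?thesis using T(2) t unfolding T'_def by blast
    qed
  qed
  have img: "c' ` T' = insert col0 (c ` T - c ` I)"
  proof
    show "c' ` T' \<subseteq> insert col0 (c ` T - c ` I)"
      unfolding T'_def c'_def by auto
    show "insert col0 (c ` T - c ` I) \<subseteq> c' ` T'"
    proof
      fix col assume col: "col \<in> insert col0 (c ` T - c ` I)"
      show "col \<in> c' ` T'"
      proof (cases "col = col0")
        case True
        then have "c' i = col" unfolding c'_def by simp
        then show ?thesis unfolding T'_def by blast
      next
        case False
        then obtain t where t: "t \<in> T" "c t = col" "col \<notin> c ` I" using col by auto
        then have "t \<notin> {i,j}" unfolding I_def by blast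
        then have "c' t = col" using t unfolding c'_def by simp
        then show ?thesis using t unfolding T'_def by blast
      qed
    qed
  qed
  have IT: "I \<subseteq> T" unfolding I_def by blast
  have cimg: "card (c' ` T') = Suc (card (c ` T) - card (c ` I))"
  proof -
    have "card (c' ` T') = Suc (card (c ` T - c ` I))" using img col0 finT by simp
    also have "card (c ` T - c ` I) = card (c ` T) - card (c ` I)"
      using IT finT by (intro card_Diff_subset) (auto intro: finite_subset)
    finally show ?thesis .
  qed
  have a1: "card (c ` I) \<le> card I" using card_image_le finT IT finite_subset by blast
  have a2: "card (c ` I) \<le> card (c ` T)" using IT finT by (intro card_mono) auto
  have a3: "card I \<le> 2" unfolding I_def using ij(2) card_mono[of "{i,j}" "{i,j} \<inter> T"]
    by (metis card_2_iff finite.emptyI finite.insertI inf_le1)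
  have cT': "card T' = card T + 2 - card I"
  proof -
    have "card T + card {i,j} = card T' + card (T \<inter> {i,j})"
      unfolding T'_def using finT by (intro card_Un_Int) auto
    moreover have "card {i,j} = 2" using ij(2) by simp
    moreover have "T \<inter> {i,j} = I" unfolding I_def by blast
    ultimately have "card T + 2 = card T' + card I" by simp
    then show ?thesis by linarith
  qed
  have cardok: "card T' \<le> Suc k + card (c' ` T')"
    by (rule step_card[OF T(4) a1 a2 a3 cT' cimg])
  have other: "n dvd (\<Sum>t\<in>{t\<in>T'. c' t = col}. x!t)" if ne: "col \<noteq> col0" for col
  proof (cases "col \<in> c ` I")
    case True
    then have "{t\<in>T'. c' t = col} = {}" using ne unfolding c'_def by auto
    then show ?thesis by (metis sum.empty dvd_0_right)
  next
    case False
    have eq: "{t\<in>T'. c' t = col} = {t\<in>T. c t = col}"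
    proof
      show "{t\<in>T'. c' t = col} \<subseteq> {t\<in>T. c t = col}"
        using ne unfolding c'_def T'_def by (auto split: if_splits)
      show "{t\<in>T. c t = col} \<subseteq> {t\<in>T'. c' t = col}"
      proof
        fix t assume t: "t \<in> {t\<in>T. c t = col}"
        then have "t \<notin> {i,j}" using False unfolding I_def by blast
        then show "t \<in> {t\<in>T'. c' t = col}" using t False unfolding c'_def T'_def by auto
      qed
    qed
    have "(\<Sum>t\<in>{t\<in>T. c t = col}. x!t) = (\<Sum>t\<in>{t\<in>T. c t = col}. y!t)"
    proof (rule sum.cong)
      fix t assume t: "t \<in> {t\<in>T. c t = col}"
      then have "t \<notin> {i,j}" using False unfolding I_def by blast
      then show "x!t = y!t" using oth t T(1) by auto
    qed simp
    then show ?thesis using eq T(3) by simp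
  qed
  define G where "G col = (\<Sum>t\<in>{t\<in>T'. c' t = col}. x!t)" for col
  have tot: "(\<Sum>t\<in>T'. x!t) = (\<Sum>t<m. x!t)"
  proof -
    have "(\<Sum>t<m. x!t) = (\<Sum>t\<in>T'. x!t) + (\<Sum>t\<in>{..<m}-T'. x!t)"
      using T'm finT' by (metis add.commute finite_lessThan sum.subset_diff)
    moreover have "(\<Sum>t\<in>{..<m}-T'. x!t) = 0" using supp by (intro sum.neutral) auto
    ultimately show ?thesis by simp
  qed
  have dvdtot: "n dvd (\<Sum>t\<in>T'. x!t)" using tot xV unfolding vert_iff using assms by simp
  have "(\<Sum>t\<in>T'. x!t) = (\<Sum>col\<in>c' ` T'. G col)"
    unfolding G_def using finT' by (rule sum.image_gen)
  also have "\<dots> = G col0 + (\<Sum>col\<in>c' ` T' - {col0}. G col)"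
    by (rule sum.remove) (use finT' in simp, use img in blast)
  finally have "n dvd G col0 + (\<Sum>col\<in>c' ` T' - {col0}. G col)" using dvdtot by simp
  moreover have "n dvd (\<Sum>col\<in>c' ` T' - {col0}. G col)"
  proof (rule dvd_sum)
    fix col assume "col \<in> c' ` T' - {col0}"
    then have "col \<noteq> col0" by blast
    then show "n dvd G col" using other unfolding G_def by blast
  qed
  ultimately have "n dvd G col0" by (simp add: dvd_add_left_iff)
  then have alld: "\<forall>col. n dvd (\<Sum>t\<in>{t\<in>T'. c' t = col}. x!t)"
    using other unfolding G_def by metis
  show ?thesis unfolding zsc_def using T'm supp alld cardok by blast
qed

lemma zsc_reach:
  assumes "(csr_adj m n ^^ k) (replicate m 0) x"
  shows "zsc m n x k"
  using assms
proof (induction k arbitrary: x)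
  case 0
  then have "x = replicate m 0" by simp
  then show ?case unfolding zsc_def by (intro exI[of _ "{}"]) auto
next
  case (Suc k)
  then obtain y where "(csr_adj m n ^^ k) (replicate m 0) y" "csr_adj m n y x" by (auto elim: relpowp_Suc_E)
  then show ?case using Suc.IH zsc_step by blast
qed


lemma dvd_fix: "0<(n::nat) \<Longrightarrow> n dvd (m' + (n - m' mod n) mod n)"
  by (metis linordered_semidom_class.add_diff_inverse mod_add_left_eq
    mod_add_right_eq mod_eq_0_iff_dvd mod_less_divisor mod_self
    nat_diff_split_asm not_less_zero zero_less_diff)

definition x0 :: "nat \<Rightarrow> nat \<Rightarrow> nat list" where
  "x0 m n = map (\<lambda>t. if t < m - 1 then 1 else (n - (m-1) mod n) mod n) [0..<m]"

lemma x0_nth: "t < m \<Longrightarrow> x0 m n ! t = (if t < m - 1 then 1 else (n - (m-1) mod n) mod n)"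
  unfolding x0_def by simp

lemma x0_vert:
  assumes n: "2 \<le> n" and m: "0 < m"
  shows "x0 m n \<in> csr_vertices m n"
proof -
  obtain m' where m': "m = Suc m'" using m by (cases m) auto
  have "(\<Sum>t<m. x0 m n ! t) = (\<Sum>t<m'. x0 m n ! t) + x0 m n ! m'" using m' by simp
  also have "(\<Sum>t<m'. x0 m n ! t) = (\<Sum>t<m'. 1)" using m' by (intro sum.cong) (auto simp: x0_nth)
  also have "x0 m n ! m' = (n - m' mod n) mod n" using m' by (simp add: x0_nth)
  finally have "(\<Sum>t<m. x0 m n ! t) = m' + (n - m' mod n) mod n" by simp
  then have "n dvd (\<Sum>t<m. x0 m n ! t)" using dvd_fix[of n m'] n by simp
  moreover have "\<forall>t<m. x0 m n ! t < n" using n by (auto simp: x0_nth)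
  moreover have "length (x0 m n) = m" unfolding x0_def by simp
  ultimately show ?thesis unfolding vert_iff by blast
qed

lemma lower:
  assumes n: "2 \<le> n" and m: "0 < m"
    and k: "(csr_adj m n ^^ k) (replicate m 0) (x0 m n)"
  shows "m - (m-1) div n - 1 \<le> k"
proof -
  obtain T and c :: "nat \<Rightarrow> nat" where T: "T \<subseteq> {..<m}" "{t. t<m \<and> x0 m n!t \<noteq> 0} \<subseteq> T"
     "\<forall>col. n dvd (\<Sum>t\<in>{t\<in>T. c t = col}. x0 m n!t)" "card T \<le> k + card (c ` T)"
    using zsc_reach[OF k] unfolding zsc_def by blast
  have finT: "finite T" using T(1) finite_subset by blast
  have sub: "{..<m-1} \<subseteq> T"
  proof
    fix t assume "t \<in> {..<m-1}"
    then have "t < m" "x0 m n ! t \<noteq> 0" by (auto simp: x0_nth)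
    then show "t \<in> T" using T(2) by blast
  qed
  define cls where "cls col = {t\<in>T. c t = col}" for col
  have fincls: "finite (cls col)" for col unfolding cls_def using finT by simp
  have good: "n \<le> card (cls col)" if col: "col \<in> c ` T" "m - 1 \<notin> cls col" for col
  proof -
    have sub1: "cls col \<subseteq> {..<m-1}"
    proof
      fix t assume t: "t \<in> cls col"
      then have "t < m" "t \<noteq> m - 1" using T(1) col(2) unfolding cls_def by auto
      then show "t \<in> {..<m-1}" by simp
    qed
    have "(\<Sum>t\<in>cls col. x0 m n ! t) = (\<Sum>t\<in>cls col. 1)"
    proof (rule sum.cong)
      fix t assume "t \<in> cls col"
      then have "t < m - 1" using sub1 by auto
      then show "x0 m n ! t = 1" by (simp add: x0_nth)
    qed simp
    then have "n dvd card (cls col)" using T(3) unfolding cls_def by (metis card_eq_sum)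
    moreover have "cls col \<noteq> {}" using col(1) unfolding cls_def by auto
    then have "0 < card (cls col)" using fincls by (simp add: card_gt_0_iff)
    ultimately show ?thesis by (simp add: dvd_imp_le)
  qed
  have cardT: "card T = (\<Sum>col\<in>c ` T. card (cls col))"
  proof -
    have "card T = (\<Sum>t\<in>T. 1)" by simp
    also have "\<dots> = (\<Sum>col\<in>c ` T. \<Sum>t\<in>cls col. 1)" unfolding cls_def using finT by (rule sum.image_gen)
    finally show ?thesis by simp
  qed
  have finK: "finite (c ` T)" using finT by simp
  show ?thesis
  proof (cases "m - 1 \<in> T")
    case False
    have Teq: "T = {..<m-1}"
    proof
      show "T \<subseteq> {..<m-1}"
      proof
        fix t assume t: "t \<in> T"
        then have "t < m" "t \<noteq> m - 1" using T(1) False by auto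
        then show "t \<in> {..<m-1}" by simp
      qed
    qed (rule sub)
    have "of_nat (card (c ` T)) * n \<le> (\<Sum>col\<in>c ` T. card (cls col))"
      by (rule sum_bounded_below) (use good False in \<open>auto simp: cls_def\<close>)
    then have "card (c ` T) * n \<le> m - 1" using cardT Teq by simp
    then have "card (c ` T) \<le> (m-1) div n" using n by (simp add: less_eq_div_iff_mult_less_eq)
    moreover have "m - 1 \<le> k + card (c ` T)" using T(4) Teq by simp
    ultimately show ?thesis by linarith
  next
    case True
    have Teq: "T = {..<m}"
    proof
      show "{..<m} \<subseteq> T"
      proof
        fix t assume "t \<in> {..<m}"
        then have "t < m - 1 \<or> t = m - 1" by auto
        then show "t \<in> T" using sub True by auto
      qed
    qed (rule T(1))
    define col1 where "col1 = c (m-1)"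
    have col1K: "col1 \<in> c ` T" using True unfolding col1_def by blast
    have "m - 1 \<in> cls col1" using True unfolding cls_def col1_def by simp
    then have c1: "1 \<le> card (cls col1)" using fincls by (metis One_nat_def Suc_leI card_gt_0_iff empty_iff)
    have "(\<Sum>col\<in>c ` T. card (cls col)) = card (cls col1) + (\<Sum>col\<in>c ` T - {col1}. card (cls col))"
      by (rule sum.remove[OF finK col1K])
    moreover have "of_nat (card (c ` T - {col1})) * n \<le> (\<Sum>col\<in>c ` T - {col1}. card (cls col))"
    proof (rule sum_bounded_below)
      fix col assume col: "col \<in> c ` T - {col1}"
      then have "m - 1 \<notin> cls col" unfolding cls_def col1_def by auto
      then show "n \<le> card (cls col)" using good col by blast
    qed
    ultimately have "card (c ` T - {col1}) * n \<le> m - 1" using cardT Teq c1 by simp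
    then have "card (c ` T - {col1}) \<le> (m-1) div n" using n by (simp add: less_eq_div_iff_mult_less_eq)
    moreover have "card (c ` T - {col1}) = card (c ` T) - 1" using col1K finK by simp
    moreover have "card (c ` T) \<ge> 1" using col1K finK by (metis One_nat_def Suc_leI card_gt_0_iff empty_iff)
    moreover have "m \<le> k + card (c ` T)" using T(4) Teq by simp
    ultimately show ?thesis by linarith
  qed
qed

theorem theorem5:
  fixes m n :: nat
  assumes "0 < m" and "0 < n"
  shows "graph_diam (csr_vertices m n) (csr_adj m n) = enat (m - (m - 1) div n - 1)"
proof (rule antisym)
  define F where "F = m - (m - 1) div n - 1"
  show "graph_diam (csr_vertices m n) (csr_adj m n) \<le> enat (m - (m - 1) div n - 1)"
    unfolding graph_diam_def
  proof (intro SUP_least)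
    fix u v assume u: "u \<in> csr_vertices m n" and v: "v \<in> csr_vertices m n"
    define s where "s = card {t. t<m \<and> u!t \<noteq> v!t}"
    obtain k where k: "k \<le> s - (s-1) div n - 1" "(csr_adj m n ^^ k) u v"
      using upper[OF assms(2) u v s_def[symmetric]] by blast
    have "s \<le> card {..<m}" unfolding s_def by (intro card_mono) auto
    then have "s \<le> m" by simp
    then have "k \<le> m - (m - 1) div n - 1" using fmono[OF assms(2)] k(1) le_trans by blast
    moreover have "graph_dist (csr_adj m n) u v \<le> enat k"
      unfolding graph_dist_def using k(2) by (intro INF_lower) simp
    ultimately show "graph_dist (csr_adj m n) u v \<le> enat (m - (m - 1) div n - 1)"
      using order_trans by fastforce
  qed
  show "enat (m - (m - 1) div n - 1) \<le> graph_diam (csr_vertices m n) (csr_adj m n)"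
  proof (cases "n = 1")
    case True
    then show ?thesis using assms by (simp add: zero_enat_def[symmetric])
  next
    case False
    then have n2: "2 \<le> n" using assms by linarith
    have zV: "replicate m 0 \<in> csr_vertices m n" unfolding vert_iff using assms by simp
    have xV: "x0 m n \<in> csr_vertices m n" by (rule x0_vert[OF n2 assms(1)])
    have "enat (m - (m - 1) div n - 1) \<le> graph_dist (csr_adj m n) (replicate m 0) (x0 m n)"
      unfolding graph_dist_def
    proof (rule INF_greatest)
      fix k assume "k \<in> {k. (csr_adj m n ^^ k) (replicate m 0) (x0 m n)}"
      then show "enat (m - (m - 1) div n - 1) \<le> enat k" using lower[OF n2 assms(1)] by simp
    qed
    also have "\<dots> \<le> (SUP v \<in> csr_vertices m n. graph_dist (csr_adj m n) (replicate m 0) v)"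
      by (rule SUP_upper[OF xV])
    also have "\<dots> \<le> graph_diam (csr_vertices m n) (csr_adj m n)"
      unfolding graph_diam_def by (rule SUP_upper[OF zV])
    finally show ?thesis .
  qed
qed

end
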